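(* Let $\beta \in \mathcal{P}$ and $\alpha \in E$ satisfy $\alpha^{q+1} = \beta^q + \beta^{q^2+q+1}$. If $\alpha \neq 0$, then $\alpha^{q^2-1}\beta^{q+1} = 1$.
   Context: Let $q = 2^m$ with $m \ge 1$, and let $E = \mathbb{F}_{q^4}$. Define $\mathcal{P} = \{x \in E \mid x^{q^3+q^2+q+1} = 1\}$. *)

theory Defs
  imports Main
begin

text \<open>E = F_{q^4} is modelled as a finite field type 'a with CARD('a) = q^4, q = 2^m.
  The set P = {x in E. x^(q^3+q^2+q+1) = 1}.\<close>

definition P_set :: "nat \<Rightarrow> 'a::field set" where
  "P_set q = {x. x ^ (q^3 + q^2 + q + 1) = 1}"

end

theory Submission
  imports Defs "HOL-Number_Theory.Number_Theory"
begin

lemma two_zero: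
  assumes "card (UNIV :: 'a::{field,finite} set) = 2 ^ k"
  shows "(2::'a) = 0"
proof -
  have pos: "CHAR('a) > 0" by (simp add: finite_imp_CHAR_pos)
  have pr: "prime CHAR('a)" using prime_CHAR_semidom[OF pos] .
  have "CHAR('a) dvd 2 ^ k" using CHAR_dvd_CARD[where 'a='a] assms by simp
  hence "CHAR('a) dvd 2" using pr prime_dvd_power by blast
  moreover have "CHAR('a) \<noteq> 1" using pr by auto
  ultimately have "CHAR('a) = 2" using prime_nat_iff[of 2] by auto
  thus ?thesis by (metis of_nat_CHAR of_nat_numeral)
qed

lemma frob2:
  assumes "(2::'a::field) = 0"
  shows "((a::'a) + b) ^ (2 ^ n) = a ^ (2 ^ n) + b ^ (2 ^ n)"
proof (induction n)
  case 0 then show ?case by simp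
next
  case (Suc n)
  have sq: "(x + y) ^ 2 = x ^ 2 + y ^ 2" for x y :: 'a
  proof -
    have "(x + y) ^ 2 = x^2 + y^2 + 2 * x * y" by (simp add: power2_eq_square algebra_simps)
    thus ?thesis using assms by simp
  qed
  have "(a + b) ^ (2 ^ Suc n) = ((a + b) ^ (2 ^ n)) ^ 2" by (simp add: power_mult[symmetric] mult.commute)
  also have "\<dots> = a ^ (2 ^ Suc n) + b ^ (2 ^ Suc n)" using Suc sq by (simp add: power_mult[symmetric] mult.commute)
  finally show ?case .
qed

theorem lemma2p2:
  fixes \<alpha> \<beta> :: "'a::{field,finite}" and m q :: nat
  assumes "m \<ge> 1" and "q = 2 ^ m" and "card (UNIV :: 'a set) = q ^ 4"
    and "\<beta> \<in> P_set q"
    and "\<alpha> ^ (q + 1) = \<beta> ^ q + \<beta> ^ (q^2 + q + 1)"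
    and "\<alpha> \<noteq> 0"
  shows "\<alpha> ^ (q^2 - 1) * \<beta> ^ (q + 1) = 1"
proof -
  have c: "card (UNIV :: 'a set) = 2 ^ (m*4)" using assms(2,3) by (simp add: power_mult)
  have two: "(2::'a) = 0" using two_zero[OF c] .
  have fr: "(x + y) ^ q = x ^ q + y ^ q" for x y :: 'a using frob2[OF two] assms(2) by simp
  have nb: "\<beta> ^ (q^3 + q^2 + q + 1) = 1" using assms(4) by (simp add: P_set_def)
  have q1: "q \<ge> 1" using assms(2) by simp
  define N where "N = \<alpha> ^ (q + 1)"
  have N: "N = \<beta> ^ q + \<beta> ^ (q^2 + q + 1)" using assms(5) N_def by simp
  have Nq: "N ^ q = \<beta> ^ (q^2) + \<beta> ^ (q^3 + q^2 + q)"
  proof -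
    have "N ^ q = (\<beta> ^ q) ^ q + (\<beta> ^ (q^2 + q + 1)) ^ q" using N fr by simp
    also have "\<dots> = \<beta> ^ (q^2) + \<beta> ^ (q^3 + q^2 + q)"
      by (simp only: power_mult[symmetric]) (simp add: power2_eq_square power3_eq_cube algebra_simps)
    finally show ?thesis .
  qed
  have key: "N ^ q * \<beta> ^ (q + 1) = N"
  proof -
    have "N ^ q * \<beta> ^ (q + 1) = \<beta> ^ (q^2 + q + 1) + \<beta> ^ (q^3 + q^2 + q + 1) * \<beta> ^ q"
      unfolding Nq by (simp add: distrib_right power_add[symmetric] algebra_simps)
    also have "\<dots> = N" using nb N by simp
    finally show ?thesis .
  qed
  have Nnz: "N \<noteq> 0" using assms(6) N_def by simp
  have "\<alpha> ^ (q^2 - 1) * N = N ^ q"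
  proof -
    have "q^2 - 1 + (q + 1) = q * (q + 1)" using q1 by (simp add: power2_eq_square algebra_simps)
    hence "\<alpha> ^ (q^2 - 1) * N = \<alpha> ^ (q * (q+1))" unfolding N_def by (metis power_add)
    moreover have "N ^ q = \<alpha> ^ (q * (q+1))" unfolding N_def by (metis power_mult mult.commute)
    ultimately show ?thesis by simp
  qed
  hence "\<alpha> ^ (q^2 - 1) * \<beta> ^ (q + 1) * N = N" using key by (metis mult.commute mult.assoc)
  thus ?thesis using Nnz by (metis mult_cancel_right2)
qed

end
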